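(* Let $H\in(0,\frac12)\cup(\frac12,1)$, $\sigma$ an invertible $n\times n$ matrix, and let $b:\mathbb{R}^n\to\mathbb{R}^n$ satisfy: if $H>\frac12$, there is $\alpha>1-\frac1{2H}$ with $\sup_{y\ne z}\frac{|b(y)-b(z)|}{|y-z|^\alpha}<\infty$; if $H<\frac12$, $b$ is Borel measurable with at most linear growth. For $y_0\in\mathbb{R}^n$ let $Y^{y_0}$ be the solution of $dY_t=b(Y_t)dt+\sigma dB_t$, $Y_0=y_0$, with $B$ an $n$-dimensional fBm with Hurst parameter $H$. Let $K\subset\mathbb{R}^n$ be compact. Then for each $T>0$ there is $\rho>0$ such that $$\sup_{y_0\in K}\sup_{t\in[0,T]}\mathbb{E}\big[e^{\rho|Y^{y_0}_t|^2}\big]<\infty.$$ *)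

theory Defs
  imports "HOL-Probability.Probability"
begin

text \<open>Covariance function of a one-dimensional fractional Brownian motion with Hurst parameter H.\<close>
definition fbm_cov :: "real \<Rightarrow> real \<Rightarrow> real \<Rightarrow> real" where
  "fbm_cov H s t = ((\<bar>s\<bar> powr (2*H) + \<bar>t\<bar> powr (2*H) - \<bar>t - s\<bar> powr (2*H)) / 2)"

text \<open>A real random variable is Gaussian: either normally distributed with positive
  variance, or almost surely constant (degenerate Gaussian).\<close>
definition real_gaussian :: "'a measure \<Rightarrow> ('a \<Rightarrow> real) \<Rightarrow> bool" where
  "real_gaussian M X \<longleftrightarrow> X \<in> borel_measurable M \<and>
     ((\<exists>\<mu> s. s > 0 \<and> distributed M lborel X (\<lambda>x. ennreal (normal_density \<mu> s x)))
      \<or> (\<exists>c. AE \<omega> in M. X \<omega> = c))"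

text \<open>n-dimensional fractional Brownian motion (components indexed by the finite type 'n)
  on the probability space M: a centred Gaussian process with B_0 = 0, continuous paths,
  and covariance E[B^i_s B^j_t] = delta_ij * R_H(s,t).\<close>
definition is_fBm :: "real \<Rightarrow> 'a measure \<Rightarrow> (real \<Rightarrow> 'a \<Rightarrow> real ^ 'n::finite) \<Rightarrow> bool" where
  "is_fBm H M B \<longleftrightarrow>
     (\<forall>t\<ge>0. B t \<in> borel_measurable M) \<and>
     (AE \<omega> in M. B 0 \<omega> = 0 \<and> continuous_on {0..} (\<lambda>t. B t \<omega>)) \<and>
     (\<forall>(F :: (real \<times> 'n) set) c. finite F \<and> fst ` F \<subseteq> {0..} \<longrightarrow>
         real_gaussian M (\<lambda>\<omega>. \<Sum>p\<in>F. c p * (B (fst p) \<omega> $ snd p))) \<and>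
     (\<forall>t\<ge>0. \<forall>i. integrable M (\<lambda>\<omega>. B t \<omega> $ i) \<and> (\<integral>\<omega>. B t \<omega> $ i \<partial>M) = 0) \<and>
     (\<forall>s\<ge>0. \<forall>t\<ge>0. \<forall>i j. integrable M (\<lambda>\<omega>. (B s \<omega> $ i) * (B t \<omega> $ j)) \<and>
         (\<integral>\<omega>. (B s \<omega> $ i) * (B t \<omega> $ j) \<partial>M) = (if i = j then fbm_cov H s t else 0))"

text \<open>Completed natural filtration of B.\<close>
definition fbm_filtration :: "'a measure \<Rightarrow> (real \<Rightarrow> 'a \<Rightarrow> real ^ 'n::finite) \<Rightarrow> real \<Rightarrow> 'a measure" where
  "fbm_filtration M B t = sigma (space M)
     ({B s -` A \<inter> space M | s A. s \<in> {0..t} \<and> A \<in> sets borel} \<union> null_sets M)"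

text \<open>Y is a (strong) solution of dY_t = b(Y_t) dt + sigma dB_t, Y_0 = y0, on [0,infinity):
  adapted to the completed filtration of B, continuous paths, and almost surely
  Y_t = y0 + int_0^t b(Y_s) ds + sigma B_t for all t >= 0.\<close>
definition is_fSDE_solution ::
  "'a measure \<Rightarrow> (real \<Rightarrow> 'a \<Rightarrow> real ^ 'n::finite) \<Rightarrow> (real ^ 'n \<Rightarrow> real ^ 'n) \<Rightarrow>
   real ^ 'n ^ 'n \<Rightarrow> real ^ 'n \<Rightarrow> (real \<Rightarrow> 'a \<Rightarrow> real ^ 'n) \<Rightarrow> bool" where
  "is_fSDE_solution M B b \<sigma> y0 Y \<longleftrightarrow>
     (\<forall>t\<ge>0. Y t \<in> measurable (fbm_filtration M B t) borel) \<and>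
     (AE \<omega> in M. continuous_on {0..} (\<lambda>t. Y t \<omega>) \<and>
        (\<forall>t\<ge>0. ((\<lambda>s. b (Y s \<omega>)) has_integral (Y t \<omega> - y0 - \<sigma> *v B t \<omega>)) {0..t}))"

end

theory Submission imports Defs begin

lemma hoelder_lin_growth:
  fixes b :: "'a::real_normed_vector \<Rightarrow> 'b::real_normed_vector"
  assumes a: "\<alpha> > 0" and L: "\<forall>y z. y \<noteq> z \<longrightarrow> norm (b y - b z) \<le> L * norm (y - z) powr \<alpha>"
  shows "\<exists>C\<ge>0. \<forall>y. norm (b y) \<le> C * (1 + norm y)"
proof -
  have main: "norm (b y - b 0) \<le> \<bar>L\<bar> * (norm y + 2)" for y
  proof -
    define k where "k = nat \<lceil>norm y\<rceil> + 1"
    have k1: "k \<ge> 1" by (simp add: k_def)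
    have kge: "real k \<ge> norm y" unfolding k_def by linarith
    have kle: "real k \<le> norm y + 2" unfolding k_def
      using of_nat_nat[of "\<lceil>norm y\<rceil>"] ceiling_less_cancel[of "norm y"] by (simp, linarith)
    define p where "p i = (real i / real k) *\<^sub>R y" for i
    have step: "norm (b (p (Suc i)) - b (p i)) \<le> \<bar>L\<bar>" for i
    proof (cases "p (Suc i) = p i")
      case True then show ?thesis by simp
    next
      case False
      have d: "p (Suc i) - p i = (1 / real k) *\<^sub>R y"
        unfolding p_def by (simp add: scaleR_diff_left[symmetric] diff_divide_distrib[symmetric])
      have nd: "norm (p (Suc i) - p i) \<le> 1" unfolding d using k1 kge
        by (simp add: divide_le_eq_1)
      have pw: "norm (p (Suc i) - p i) powr \<alpha> \<le> 1"
        using powr_mono2[of \<alpha> "norm (p (Suc i) - p i)" 1] nd a by simp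
      have h: "norm (b (p (Suc i)) - b (p i)) \<le> L * norm (p (Suc i) - p i) powr \<alpha>"
        using L False by blast
      have "L * norm (p (Suc i) - p i) powr \<alpha> \<le> \<bar>L\<bar> * norm (p (Suc i) - p i) powr \<alpha>"
        by (intro mult_right_mono) auto
      also have "\<dots> \<le> \<bar>L\<bar>" using pw by (simp add: mult_left_le)
      finally show ?thesis using h by linarith
    qed
    have "b y - b 0 = (\<Sum>i<k. b (p (Suc i)) - b (p i))"
      using k1 sum_lessThan_telescope[of "\<lambda>i. b (p i)" k] by (simp add: p_def)
    then have "norm (b y - b 0) \<le> (\<Sum>i<k. norm (b (p (Suc i)) - b (p i)))"
      by (simp add: norm_sum)
    also have "\<dots> \<le> (\<Sum>i<k. \<bar>L\<bar>)" by (intro sum_mono step)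
    also have "\<dots> = real k * \<bar>L\<bar>" by simp
    also have "\<dots> \<le> (norm y + 2) * \<bar>L\<bar>" using kle by (simp add: mult_right_mono)
    finally show ?thesis by (simp add: mult.commute)
  qed
  show ?thesis
  proof (intro exI[of _ "2*\<bar>L\<bar> + norm (b 0)"] conjI allI)
    fix y
    have "norm (b y) \<le> norm (b y - b 0) + norm (b 0)" by (metis norm_triangle_sub add.commute)
    also have "\<dots> \<le> \<bar>L\<bar> * (norm y + 2) + norm (b 0)" using main by simp
    also have "\<dots> \<le> (2*\<bar>L\<bar> + norm (b 0)) * (1 + norm y)"
      by (simp add: algebra_simps mult_left_mono)
    finally show "norm (b y) \<le> (2*\<bar>L\<bar> + norm (b 0)) * (1 + norm y)" .
  qed simp
qed

lemma gronwall_int: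
  fixes u a :: "real \<Rightarrow> real"
  assumes C: "0 \<le> C" and cu: "continuous_on {0..T} u" and ca: "continuous_on {0..T} a"
    and le: "\<And>t. t \<in> {0..T} \<Longrightarrow> u t \<le> a t + C * integral {0..t} u"
    and a0: "\<And>t. t \<in> {0..T} \<Longrightarrow> 0 \<le> a t"
    and t: "t \<in> {0..T}"
  shows "integral {0..t} u \<le> exp (C*t) * integral {0..t} a"
proof -
  define w where "w s = exp (- C * s) * a s" for s
  have cw: "continuous_on {0..T} w" unfolding w_def by (intro continuous_intros ca)
  define V where "V x = exp (- C * x) * integral {0..x} u - integral {0..x} w" for x
  define D where "D x = exp (- C * x) * (u x - C * integral {0..x} u - a x)" for x
  have der: "(V has_real_derivative D x) (at x within {0..t})" if x: "x \<in> {0..t}" for x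
  proof -
    have xT: "x \<in> {0..T}" using x t by auto
    have sub: "{0..t} \<subseteq> {0..T}" using t by auto
    have d1: "((\<lambda>x. integral {0..x} u) has_real_derivative u x) (at x within {0..t})"
      using integral_has_vector_derivative[OF cu xT] has_vector_derivative_within_subset[OF _ sub]
      by (simp add: has_real_derivative_iff_has_vector_derivative)
    have d2: "((\<lambda>x. integral {0..x} w) has_real_derivative w x) (at x within {0..t})"
      using integral_has_vector_derivative[OF cw xT] has_vector_derivative_within_subset[OF _ sub]
      by (simp add: has_real_derivative_iff_has_vector_derivative)
    show ?thesis unfolding V_def
      by (rule derivative_eq_intros d1 d2 | simp)+ (simp add: D_def w_def algebra_simps)
  qed
  have "\<exists>x\<in>{0..t}. V t - V 0 = D x * (t - 0)"
    using mvt_very_simple[of 0 t V "\<lambda>x. (*) (D x)"] der t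
    by (auto simp: has_field_derivative_def)
  then obtain x where x: "x \<in> {0..t}" "V t - V 0 = D x * t" by auto
  have "D x \<le> 0" using le[of x] x t unfolding D_def
    by (auto intro!: mult_nonneg_nonpos)
  then have "V t \<le> 0" using x t by (simp add: V_def mult_nonpos_nonneg)
  then have A: "exp (- C * t) * integral {0..t} u \<le> integral {0..t} w" by (simp add: V_def)
  have sub: "{0..t} \<subseteq> {0..T}" using t by auto
  have "integral {0..t} w \<le> integral {0..t} a"
  proof (rule integral_le)
    show "w integrable_on {0..t}" using continuous_on_subset[OF cw sub] integrable_continuous_real by blast
    show "a integrable_on {0..t}" using continuous_on_subset[OF ca sub] integrable_continuous_real by blast
    fix s assume s: "s \<in> {0..t}"
    then have "exp (- C * s) \<le> 1" using C by auto
    then show "w s \<le> a s" unfolding w_def using a0[of s] s sub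
      by (auto intro: mult_left_le_one_le)
  qed
  with A have "exp (- C * t) * integral {0..t} u \<le> integral {0..t} a" by linarith
  then have "exp (C*t) * (exp (- C * t) * integral {0..t} u) \<le> exp (C*t) * integral {0..t} a"
    by (simp add: mult_left_mono)
  then show ?thesis by (simp add: exp_minus field_simps)
qed

lemma integral_split_sum:
  fixes g :: "real \<Rightarrow> real"
  assumes "continuous_on {a..a + real m * h} g" "0 \<le> h"
  shows "integral {a..a + real m * h} g = (\<Sum>k<m. integral {a + real k * h..a + real (Suc k) * h} g)"
  using assms(1)
proof (induction m)
  case 0 then show ?case by simp
next
  case (Suc m)
  have sub: "{a..a + real m * h} \<subseteq> {a..a + real (Suc m) * h}" using assms(2)
    by (auto simp: algebra_simps)
  have IH: "integral {a..a + real m * h} g = (\<Sum>k<m. integral {a + real k * h..a + real (Suc k) * h} g)"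
    using Suc.IH continuous_on_subset[OF Suc.prems sub] by blast
  have "integral {a..a + real m * h} g + integral {a + real m * h..a + real (Suc m) * h} g
        = integral {a..a + real (Suc m) * h} g"
  proof (rule Henstock_Kurzweil_Integration.integral_combine)
    show "a \<le> a + real m * h" using assms(2) by simp
    show "a + real m * h \<le> a + real (Suc m) * h" using assms(2) by (simp add: algebra_simps)
    show "g integrable_on {a..a + real (Suc m) * h}" using Suc.prems integrable_continuous_real by blast
  qed
  then show ?case using IH by simp
qed

lemma integral_piece:
  fixes g :: "real \<Rightarrow> real"
  assumes c: "continuous_on {x..x+h} g" and h: "0 \<le> h" and e: "\<And>y. y \<in> {x..x+h} \<Longrightarrow> \<bar>g y - g x\<bar> \<le> e"
  shows "\<bar>integral {x..x+h} g - h * g x\<bar> \<le> h * e"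
proof -
  have ig: "g integrable_on {x..x+h}" using c integrable_continuous_real by blast
  have "integral {x..x+h} (\<lambda>y. g y - g x) = integral {x..x+h} g - h * g x"
    using ig h by (simp add: integral_diff integrable_const_ivl)
  moreover have "norm (integral {x..x+h} (\<lambda>y. g y - g x)) \<le> integral {x..x+h} (\<lambda>y. e)"
    by (rule integral_norm_bound_integral) (use ig e integrable_diff[OF ig integrable_const_ivl] in auto)
  ultimately show ?thesis using h by simp
qed

lemma riemann_conv:
  fixes g :: "real \<Rightarrow> real"
  assumes c: "continuous_on {0..T} g" and T: "0 < T"
  shows "(\<lambda>m. (T / real (Suc m)) * (\<Sum>k<Suc m. g (real k * (T / real (Suc m))))) \<longlonglongrightarrow> integral {0..T} g"
proof (rule LIMSEQ_I)
  fix r :: real assume r: "0 < r"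
  define e where "e = r / (2*T)"
  have e: "0 < e" using r T by (simp add: e_def)
  have "uniformly_continuous_on {0..T} g" using c compact_uniformly_continuous by blast
  then obtain d where d: "d > 0" "\<And>x x'. x \<in> {0..T} \<Longrightarrow> x' \<in> {0..T} \<Longrightarrow> dist x' x < d \<Longrightarrow> dist (g x') (g x) < e"
    unfolding uniformly_continuous_on_def using e by metis
  obtain N :: nat where N: "T / d < real N" using reals_Archimedean2 by blast
  show "\<exists>no. \<forall>n\<ge>no. norm ((T / real (Suc n)) * (\<Sum>k<Suc n. g (real k * (T / real (Suc n)))) - integral {0..T} g) < r"
  proof (intro exI allI impI)
    fix n assume n: "N \<le> n"
    define h where "h = T / real (Suc n)"
    have h0: "0 < h" using T by (simp add: h_def)
    have hd: "h < d"
    proof -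
      have "T / d < real (Suc n)" using N n by linarith
      then have "T < real (Suc n) * d" using d by (simp add: divide_less_eq)
      then show ?thesis unfolding h_def by (simp add: divide_less_eq mult.commute)
    qed
    have Th: "0 + real (Suc n) * h = T" by (simp add: h_def)
    have split: "integral {0..T} g = (\<Sum>k<Suc n. integral {0 + real k * h..0 + real (Suc k) * h} g)"
      using integral_split_sum[of 0 "Suc n" h g] c h0 Th by simp
    have pc: "\<bar>integral {real k * h..real k * h + h} g - h * g (real k * h)\<bar> \<le> h * e" if k: "k < Suc n" for k
    proof (rule integral_piece)
      have "real (Suc k) * h \<le> real (Suc n) * h"
        by (rule mult_right_mono) (use k h0 in auto)
      then have "real k * h + h \<le> T" using Th by (simp add: algebra_simps)
      then have sub: "{real k * h..real k * h + h} \<subseteq> {0..T}" using h0 by auto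
      show "continuous_on {real k * h..real k * h + h} g" using continuous_on_subset[OF c sub] .
      show "0 \<le> h" using h0 by simp
      fix y assume y: "y \<in> {real k * h..real k * h + h}"
      have "dist y (real k * h) < d" using y hd h0 by (auto simp: dist_real_def) 
      moreover have "dist y (real k * h) \<noteq> d \<or> True" by simp
      ultimately have "dist (g y) (g (real k * h)) < e"
      proof -
        have "0 \<le> real k * h" using h0 by simp
        then have "0 \<le> y" using y by (simp only: atLeastAtMost_iff) linarith
        then show ?thesis using \<open>dist y (real k * h) < d\<close> d(2)[of "real k * h" y] y sub h0 by auto
      qed
      then show "\<bar>g y - g (real k * h)\<bar> \<le> e" by (simp add: dist_real_def)
    qed
    have "\<bar>h * (\<Sum>k<Suc n. g (real k * h)) - integral {0..T} g\<bar>
          = \<bar>\<Sum>k<Suc n. (h * g (real k * h) - integral {real k * h..real k * h + h} g)\<bar>"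
      unfolding split by (simp add: sum_subtractf sum_distrib_left algebra_simps)
    also have "\<dots> \<le> (\<Sum>k<Suc n. \<bar>h * g (real k * h) - integral {real k * h..real k * h + h} g\<bar>)"
      by (rule sum_abs)
    also have "\<dots> \<le> (\<Sum>k<Suc n. h * e)"
      by (intro sum_mono) (use pc in \<open>auto simp: abs_minus_commute\<close>)
    also have "\<dots> = T * e" using Th by simp
    also have "\<dots> < r" using T r by (simp add: e_def)
    finally show "norm ((T / real (Suc n)) * (\<Sum>k<Suc n. g (real k * (T / real (Suc n)))) - integral {0..T} g) < r"
      by (simp add: h_def)
  qed
qed

lemma path_bound:
  fixes Yp Bp :: "real \<Rightarrow> real^'n" and b :: "real^'n \<Rightarrow> real^'n" and \<sigma> :: "real^'n^'n"
  assumes C0: "0 \<le> C" and Cb: "\<And>y. norm (b y) \<le> C*(1+norm y)"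
    and s0: "0 \<le> sg" and sb: "\<And>x. norm (\<sigma> *v x) \<le> sg * norm x"
    and y0: "norm y0 \<le> R" and T: "0 \<le> T"
    and cY: "continuous_on {0..} Yp" and cB: "continuous_on {0..} Bp"
    and int: "\<And>t. t \<ge> 0 \<Longrightarrow> ((\<lambda>s. b (Yp s)) has_integral (Yp t - y0 - \<sigma> *v Bp t)) {0..t}"
    and t: "t \<in> {0..T}"
  shows "norm (Yp t) \<le> (R + C*T) * (1 + C*exp(C*T)*T) + sg * norm (Bp t)
           + C*exp(C*T)* sg * integral {0..T} (\<lambda>r. norm (Bp r))"
proof -
  define u where "u s = norm (Yp s)" for s
  define a where "a s = R + C*T + sg * norm (Bp s)" for s
  have R0: "0 \<le> R" using y0 norm_ge_zero order_trans by blast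
  have subT: "{0..T} \<subseteq> {0..}" by auto
  have cu: "continuous_on {0..T} u" unfolding u_def
    by (intro continuous_intros continuous_on_subset[OF cY subT])
  have cBn: "continuous_on {0..T} (\<lambda>r. norm (Bp r))"
    by (intro continuous_intros continuous_on_subset[OF cB subT])
  have ca: "continuous_on {0..T} a" unfolding a_def
    by (intro continuous_intros continuous_on_subset[OF cB subT])
  have a0: "0 \<le> a s" for s unfolding a_def using R0 C0 T s0 by simp
  have key: "u s \<le> a s + C * integral {0..s} u" if s: "s \<in> {0..T}" for s
  proof -
    have s0': "0 \<le> s" using s by simp
    have sub: "{0..s} \<subseteq> {0..T}" using s by auto
    have iu: "u integrable_on {0..s}" using continuous_on_subset[OF cu sub] integrable_continuous_real by blast
    have hi: "((\<lambda>r. b (Yp r)) has_integral (Yp s - y0 - \<sigma> *v Bp s)) {0..s}" using int s0' .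
    have eqI: "integral {0..s} (\<lambda>r. b (Yp r)) = Yp s - y0 - \<sigma> *v Bp s" using hi by (rule integral_unique)
    have "norm (integral {0..s} (\<lambda>r. b (Yp r))) \<le> integral {0..s} (\<lambda>r. C + C * u r)"
    proof (rule integral_norm_bound_integral)
      show "(\<lambda>r. b (Yp r)) integrable_on {0..s}" using hi by blast
      show "(\<lambda>r. C + C * u r) integrable_on {0..s}"
        using integrable_add[OF integrable_const_ivl integrable_on_mult_right[OF iu]] by simp
      fix r assume "r \<in> {0..s}"
      show "norm (b (Yp r)) \<le> C + C * u r" using Cb[of "Yp r"] by (simp add: u_def algebra_simps)
    qed
    also have "\<dots> = C * s + C * integral {0..s} u"
    proof -
      have "integral {0..s} (\<lambda>r. C + C * u r) = integral {0..s} (\<lambda>r. C) + integral {0..s} (\<lambda>r. C * u r)"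
        by (rule integral_add) (use iu integrable_on_mult_right in auto)
      also have "integral {0..s} (\<lambda>r. C * u r) = C * integral {0..s} u"
        using integral_mult[OF iu, of C] by simp
      finally show ?thesis using s0' by simp
    qed
    finally have nI: "norm (Yp s - y0 - \<sigma> *v Bp s) \<le> C * s + C * integral {0..s} u" using eqI by simp
    have "u s \<le> norm y0 + norm (\<sigma> *v Bp s) + norm (Yp s - y0 - \<sigma> *v Bp s)"
    proof -
      have "Yp s = y0 + \<sigma> *v Bp s + (Yp s - y0 - \<sigma> *v Bp s)" by simp
      then have "u s = norm (y0 + \<sigma> *v Bp s + (Yp s - y0 - \<sigma> *v Bp s))" unfolding u_def by metis
      also have "\<dots> \<le> norm (y0 + \<sigma> *v Bp s) + norm (Yp s - y0 - \<sigma> *v Bp s)" by (rule norm_triangle_ineq)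
      also have "\<dots> \<le> norm y0 + norm (\<sigma> *v Bp s) + norm (Yp s - y0 - \<sigma> *v Bp s)"
        using norm_triangle_ineq[of y0 "\<sigma> *v Bp s"] by linarith
      finally show ?thesis .
    qed
    also have "\<dots> \<le> R + sg * norm (Bp s) + (C * s + C * integral {0..s} u)"
      using y0 sb[of "Bp s"] nI by linarith
    also have "\<dots> \<le> a s + C * integral {0..s} u"
      using s C0 mult_left_mono[of s T C] unfolding a_def by auto
    finally show ?thesis .
  qed
  have g: "integral {0..t} u \<le> exp (C*t) * integral {0..t} a"
    by (rule gronwall_int[OF C0 cu ca key a0 t])
  have subt: "{0..t} \<subseteq> {0..T}" using t by auto
  have ia: "a integrable_on {0..T}" using ca integrable_continuous_real by blast
  have iat: "a integrable_on {0..t}" using continuous_on_subset[OF ca subt] integrable_continuous_real by blast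
  have at0: "0 \<le> integral {0..t} a" using iat a0 by (simp add: integral_nonneg)
  have atT: "integral {0..t} a \<le> integral {0..T} a"
    by (rule integral_subset_le[OF subt iat ia]) (use a0 in auto)
  have iB: "(\<lambda>r. norm (Bp r)) integrable_on {0..T}" using cBn integrable_continuous_real by blast
  have aT: "integral {0..T} a = T * (R + C*T) + sg * integral {0..T} (\<lambda>r. norm (Bp r))"
  proof -
    have "integral {0..T} a = integral {0..T} (\<lambda>r. R + C*T) + integral {0..T} (\<lambda>r. sg * norm (Bp r))"
      unfolding a_def by (rule integral_add) (use iB integrable_on_mult_right in auto)
    also have "integral {0..T} (\<lambda>r. sg * norm (Bp r)) = sg * integral {0..T} (\<lambda>r. norm (Bp r))"
      using integral_mult[OF iB, of sg] by simp
    finally show ?thesis using T by simp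
  qed
  have "exp (C*t) * integral {0..t} a \<le> exp (C*T) * integral {0..T} a"
    by (rule mult_mono) (use t C0 at0 atT in \<open>auto simp: mult_left_mono\<close>)
  with g have "C * integral {0..t} u \<le> C * (exp (C*T) * integral {0..T} a)"
    using C0 by (meson mult_left_mono order_trans)
  then have "u t \<le> a t + C * (exp (C*T) * integral {0..T} a)" using key[OF t] by linarith
  then show ?thesis unfolding aT unfolding u_def a_def by (simp add: algebra_simps)
qed

lemma normal_exp_sq_pointwise:
  fixes s x \<kappa> :: real
  assumes s: "0 < s" and k: "4 * \<kappa> * s\<^sup>2 \<le> 1"
  shows "normal_density 0 s x * exp (\<kappa> * x\<^sup>2) \<le> sqrt 2 * normal_density 0 (sqrt 2 * s) x"
proof -
  have e: "- x\<^sup>2 / (2 * s\<^sup>2) + \<kappa> * x\<^sup>2 \<le> - x\<^sup>2 / (2 * (sqrt 2 * s)\<^sup>2)"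
  proof -
    have "\<kappa> * x\<^sup>2 \<le> x\<^sup>2 / (4 * s\<^sup>2)"
    proof -
      have "\<kappa> \<le> 1 / (4 * s\<^sup>2)" using k s by (simp add: field_simps)
      then have "\<kappa> * x\<^sup>2 \<le> 1 / (4 * s\<^sup>2) * x\<^sup>2" by (rule mult_right_mono) simp
      then show ?thesis by simp
    qed
    moreover have "- x\<^sup>2 / (2 * (sqrt 2 * s)\<^sup>2) = - x\<^sup>2 / (2 * s\<^sup>2) + x\<^sup>2 / (4 * s\<^sup>2)"
      using s by (simp add: power_mult_distrib field_simps)
    ultimately show ?thesis by linarith
  qed
  have c: "sqrt 2 * (1 / sqrt (2 * pi * (sqrt 2 * s)\<^sup>2)) = 1 / sqrt (2 * pi * s\<^sup>2)"
    using s by (simp add: power_mult_distrib real_sqrt_mult field_simps)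
  have "normal_density 0 s x * exp (\<kappa> * x\<^sup>2) = 1 / sqrt (2 * pi * s\<^sup>2) * exp (- x\<^sup>2 / (2 * s\<^sup>2) + \<kappa> * x\<^sup>2)"
    unfolding normal_density_def exp_add[of "- x\<^sup>2 / (2 * s\<^sup>2)" "\<kappa> * x\<^sup>2"] by simp
  also have "\<dots> \<le> 1 / sqrt (2 * pi * s\<^sup>2) * exp (- x\<^sup>2 / (2 * (sqrt 2 * s)\<^sup>2))"
    using e by (intro mult_left_mono) auto
  also have "\<dots> = sqrt 2 * normal_density 0 (sqrt 2 * s) x"
  proof -
    have "sqrt 2 * normal_density 0 (sqrt 2 * s) x = (sqrt 2 * (1 / sqrt (2 * pi * (sqrt 2 * s)\<^sup>2))) * exp (- x\<^sup>2 / (2 * (sqrt 2 * s)\<^sup>2))"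
      unfolding normal_density_def by simp
    then show ?thesis unfolding c by simp
  qed
  finally show ?thesis .
qed

lemma gauss_exp_sq:
  fixes X :: "'a \<Rightarrow> real"
  assumes P: "prob_space M" and G: "real_gaussian M X"
    and I: "integrable M X" "(\<integral>\<omega>. X \<omega> \<partial>M) = 0"
    and I2: "integrable M (\<lambda>\<omega>. X \<omega> * X \<omega>)" "(\<integral>\<omega>. X \<omega> * X \<omega> \<partial>M) = v"
    and k: "0 \<le> \<kappa>" "4 * \<kappa> * v \<le> 1"
  shows "(\<integral>\<^sup>+\<omega>. ennreal (exp (\<kappa> * (X \<omega>)\<^sup>2)) \<partial>M) \<le> 2"
proof -
  interpret prob_space M by (rule P)
  have Xm: "X \<in> borel_measurable M" using G unfolding real_gaussian_def by blast
  consider (N) \<mu> s where "s > 0" "distributed M lborel X (\<lambda>x. ennreal (normal_density \<mu> s x))"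
    | (D) c where "AE \<omega> in M. X \<omega> = c"
    using G unfolding real_gaussian_def by blast
  then show ?thesis
  proof cases
    case (N \<mu> s)
    have "expectation X = \<mu>" by (rule normal_distributed_expectation[OF N])
    then have \<mu>0: "\<mu> = 0" using I by simp
    have "variance X = s\<^sup>2" by (rule normal_distributed_variance[OF N])
    moreover have "variance X = v" using I I2 by (simp add: power2_eq_square)
    ultimately have sv: "s\<^sup>2 = v" by simp
    have D: "distributed M lborel X (\<lambda>x. ennreal (normal_density 0 s x))" using N(2) \<mu>0 by simp
    have "(\<integral>\<^sup>+\<omega>. ennreal (exp (\<kappa> * (X \<omega>)\<^sup>2)) \<partial>M)
        = (\<integral>\<^sup>+x. ennreal (normal_density 0 s x) * ennreal (exp (\<kappa> * x\<^sup>2)) \<partial>lborel)"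
      by (rule distributed_nn_integral[OF D, symmetric]) simp
    also have "\<dots> \<le> (\<integral>\<^sup>+x. ennreal (sqrt 2) * ennreal (normal_density 0 (sqrt 2 * s) x) \<partial>lborel)"
    proof (rule nn_integral_mono)
      fix x
      have "normal_density 0 s x * exp (\<kappa> * x\<^sup>2) \<le> sqrt 2 * normal_density 0 (sqrt 2 * s) x"
        by (rule normal_exp_sq_pointwise) (use N(1) sv k in auto)
      then show "ennreal (normal_density 0 s x) * ennreal (exp (\<kappa> * x\<^sup>2)) \<le> ennreal (sqrt 2) * ennreal (normal_density 0 (sqrt 2 * s) x)"
        by (simp add: ennreal_mult[symmetric] ennreal_leI)
    qed
    also have "\<dots> = ennreal (sqrt 2) * (\<integral>\<^sup>+x. ennreal (normal_density 0 (sqrt 2 * s) x) \<partial>lborel)"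
      by (rule nn_integral_cmult) simp
    also have "(\<integral>\<^sup>+x. ennreal (normal_density 0 (sqrt 2 * s) x) \<partial>lborel) = 1"
      by (subst nn_integral_eq_integral) (use N(1) integrable_normal_density[of "sqrt 2 * s" 0] integral_normal_density[of "sqrt 2 * s" 0] in auto)
    also have "ennreal (sqrt 2) * 1 \<le> 2"
    proof -
      have "sqrt 2 \<le> sqrt (4::real)" by (subst real_sqrt_le_iff) simp
      then have "sqrt 2 \<le> (2::real)" by simp
      then show ?thesis by (simp add: ennreal_leI[where y=2, simplified])
    qed
    finally show ?thesis .
  next
    case (D c)
    have "(\<integral>\<omega>. X \<omega> \<partial>M) = (\<integral>\<omega>. c \<partial>M)" by (rule integral_cong_AE) (use Xm D in auto)
    then have c0: "c = 0" using I by (simp add: prob_space)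
    have "(\<integral>\<^sup>+\<omega>. ennreal (exp (\<kappa> * (X \<omega>)\<^sup>2)) \<partial>M) = (\<integral>\<^sup>+\<omega>. 1 \<partial>M)"
      by (rule nn_integral_cong_AE) (use D c0 in auto)
    also have "\<dots> = 1" by (simp add: emeasure_space_1)
    finally show ?thesis by simp
  qed
qed

lemma norm_sq_le_max:
  fixes x :: "real^'n"
  shows "\<exists>j. (norm x)\<^sup>2 \<le> real CARD('n) * (x$j)\<^sup>2"
proof -
  define A where "A = range (\<lambda>i. (x$i)\<^sup>2)"
  have fA: "finite A" "A \<noteq> {}" unfolding A_def by auto
  have "Max A \<in> A" using Max_in[OF fA] .
  then obtain j where j0: "Max A = (x$j)\<^sup>2" unfolding A_def by (rule rangeE)
  then have j: "(x$j)\<^sup>2 = Max A" by simp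
  have "(norm x)\<^sup>2 = (\<Sum>i\<in>UNIV. (x$i)\<^sup>2)"
    unfolding power2_norm_eq_inner inner_vec_def by (simp add: power2_eq_square)
  also have "\<dots> \<le> (\<Sum>i\<in>(UNIV::'n set). (x$j)\<^sup>2)"
  proof (intro sum_mono)
    fix i
    have "(x$i)\<^sup>2 \<in> A" unfolding A_def by blast
    then show "(x$i)\<^sup>2 \<le> (x$j)\<^sup>2" unfolding j using Max_ge[OF fA(1)] by blast
  qed
  also have "\<dots> = real CARD('n) * (x$j)\<^sup>2" by simp
  finally show ?thesis by blast
qed

lemma measurable_vec_comp[measurable]:
  fixes f :: "'a \<Rightarrow> real^'n"
  assumes "f \<in> borel_measurable M"
  shows "(\<lambda>x. f x $ i) \<in> borel_measurable M"
proof -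
  have "(\<lambda>x::real^'n. x $ i) \<in> borel_measurable borel"
    by (intro borel_measurable_continuous_onI linear_continuous_on bounded_linear_vec_nth)
  from measurable_compose[OF assms this] show ?thesis by simp
qed

lemma is_fBm_parts:
  fixes B :: "real \<Rightarrow> 'a \<Rightarrow> real^'n"
  assumes "is_fBm H M B"
  shows "\<forall>t\<ge>0. B t \<in> borel_measurable M"
    "AE \<omega> in M. B 0 \<omega> = 0 \<and> continuous_on {0..} (\<lambda>t. B t \<omega>)"
    "\<forall>(F :: (real \<times> 'n) set) c. finite F \<and> fst ` F \<subseteq> {0..} \<longrightarrow>
         real_gaussian M (\<lambda>\<omega>. \<Sum>p\<in>F. c p * (B (fst p) \<omega> $ snd p))"
    "\<forall>t\<ge>0. \<forall>i. integrable M (\<lambda>\<omega>. B t \<omega> $ i) \<and> (\<integral>\<omega>. B t \<omega> $ i \<partial>M) = 0"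
    "\<forall>s\<ge>0. \<forall>t\<ge>0. \<forall>i j. integrable M (\<lambda>\<omega>. (B s \<omega> $ i) * (B t \<omega> $ j)) \<and>
         (\<integral>\<omega>. (B s \<omega> $ i) * (B t \<omega> $ j) \<partial>M) = (if i = j then fbm_cov H s t else 0)"
  using assms unfolding is_fBm_def apply -
  apply (elim conjE, assumption)+
  done

lemma fbm_component:
  fixes B :: "real \<Rightarrow> 'a \<Rightarrow> real^'n"
  assumes fBm: "is_fBm H M B" and t: "0 \<le> t"
  shows "real_gaussian M (\<lambda>\<omega>. B t \<omega> $ i)"
    "integrable M (\<lambda>\<omega>. B t \<omega> $ i)" "(\<integral>\<omega>. B t \<omega> $ i \<partial>M) = 0"
    "integrable M (\<lambda>\<omega>. B t \<omega> $ i * B t \<omega> $ i)" "(\<integral>\<omega>. B t \<omega> $ i * B t \<omega> $ i \<partial>M) = t powr (2*H)"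
proof -
  note P = is_fBm_parts[OF fBm]
  have g: "real_gaussian M (\<lambda>\<omega>. \<Sum>p\<in>{(t,i)}. (\<lambda>_. 1) p * (B (fst p) \<omega> $ snd p))"
    by (rule P(3)[rule_format]) (use t in simp)
  then show "real_gaussian M (\<lambda>\<omega>. B t \<omega> $ i)" by simp
  have m: "integrable M (\<lambda>\<omega>. B t \<omega> $ i) \<and> (\<integral>\<omega>. B t \<omega> $ i \<partial>M) = 0"
    using P(4) t by blast
  then show "integrable M (\<lambda>\<omega>. B t \<omega> $ i)" "(\<integral>\<omega>. B t \<omega> $ i \<partial>M) = 0" by blast+
  have c: "integrable M (\<lambda>\<omega>. (B t \<omega> $ i) * (B t \<omega> $ i)) \<and>
         (\<integral>\<omega>. (B t \<omega> $ i) * (B t \<omega> $ i) \<partial>M) = (if i = i then fbm_cov H t t else 0)"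
    using P(5) t by blast
  then show "integrable M (\<lambda>\<omega>. B t \<omega> $ i * B t \<omega> $ i)" by blast
  have "(\<integral>\<omega>. B t \<omega> $ i * B t \<omega> $ i \<partial>M) = fbm_cov H t t" using c by simp
  then show "(\<integral>\<omega>. B t \<omega> $ i * B t \<omega> $ i \<partial>M) = t powr (2*H)"
    using t by (simp add: fbm_cov_def)
qed

lemma fbm_exp_sq:
  fixes B :: "real \<Rightarrow> 'a \<Rightarrow> real^'n"
  assumes P: "prob_space M" and fBm: "is_fBm H M B" and H: "0 < H" and t: "0 \<le> t" "t \<le> T"
    and k: "0 \<le> \<kappa>" "4 * \<kappa> * real CARD('n) * T powr (2*H) \<le> 1"
  shows "(\<integral>\<^sup>+\<omega>. ennreal (exp (\<kappa> * (norm (B t \<omega>))\<^sup>2)) \<partial>M) \<le> 2 * of_nat CARD('n)"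
proof -
  have "\<forall>t\<ge>0. B t \<in> borel_measurable M" using fBm unfolding is_fBm_def by blast
  then have Bm: "B t \<in> borel_measurable M" using t by blast
  have each: "(\<integral>\<^sup>+\<omega>. ennreal (exp ((\<kappa> * real CARD('n)) * (B t \<omega> $ i)\<^sup>2)) \<partial>M) \<le> 2" for i
  proof (rule gauss_exp_sq[OF P])
    note fc = fbm_component[OF fBm t(1), of i]
    show "real_gaussian M (\<lambda>\<omega>. B t \<omega> $ i)" "integrable M (\<lambda>\<omega>. B t \<omega> $ i)" "(\<integral>\<omega>. B t \<omega> $ i \<partial>M) = 0"
      "integrable M (\<lambda>\<omega>. B t \<omega> $ i * B t \<omega> $ i)" "(\<integral>\<omega>. B t \<omega> $ i * B t \<omega> $ i \<partial>M) = t powr (2*H)"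
      using fc by auto
    show "0 \<le> \<kappa> * real CARD('n)" using k by simp
    have "t powr (2*H) \<le> T powr (2*H)" using t H by (intro powr_mono2) auto
    then have "4 * (\<kappa> * real CARD('n)) * t powr (2*H) \<le> 4 * (\<kappa> * real CARD('n)) * T powr (2*H)"
      using k by (intro mult_left_mono) auto
    then show "4 * (\<kappa> * real CARD('n)) * t powr (2*H) \<le> 1" using k by (simp add: mult.assoc)
  qed
  have "(\<integral>\<^sup>+\<omega>. ennreal (exp (\<kappa> * (norm (B t \<omega>))\<^sup>2)) \<partial>M)
      \<le> (\<integral>\<^sup>+\<omega>. (\<Sum>i\<in>UNIV. ennreal (exp ((\<kappa> * real CARD('n)) * (B t \<omega> $ i)\<^sup>2))) \<partial>M)"
  proof (rule nn_integral_mono)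
    fix \<omega>
    obtain j where j: "(norm (B t \<omega>))\<^sup>2 \<le> real CARD('n) * (B t \<omega> $ j)\<^sup>2" using norm_sq_le_max by blast
    have "exp (\<kappa> * (norm (B t \<omega>))\<^sup>2) \<le> exp ((\<kappa> * real CARD('n)) * (B t \<omega> $ j)\<^sup>2)"
      using mult_left_mono[OF j k(1)] by (simp add: mult.assoc)
    then have "ennreal (exp (\<kappa> * (norm (B t \<omega>))\<^sup>2)) \<le> ennreal (exp ((\<kappa> * real CARD('n)) * (B t \<omega> $ j)\<^sup>2))"
      by (rule ennreal_leI)
    also have "\<dots> \<le> (\<Sum>i\<in>UNIV. ennreal (exp ((\<kappa> * real CARD('n)) * (B t \<omega> $ i)\<^sup>2)))"
      by (rule member_le_sum) auto
    finally show "ennreal (exp (\<kappa> * (norm (B t \<omega>))\<^sup>2)) \<le> (\<Sum>i\<in>UNIV. ennreal (exp ((\<kappa> * real CARD('n)) * (B t \<omega> $ i)\<^sup>2)))" .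
  qed
  also have "\<dots> = (\<Sum>i\<in>UNIV. (\<integral>\<^sup>+\<omega>. ennreal (exp ((\<kappa> * real CARD('n)) * (B t \<omega> $ i)\<^sup>2)) \<partial>M))"
    by (rule nn_integral_sum) (use measurable_vec_comp[OF Bm] in measurable)
  also have "\<dots> \<le> (\<Sum>i\<in>(UNIV::'n set). 2)" by (intro sum_mono each)
  also have "\<dots> = 2 * of_nat CARD('n)" by (simp add: mult.commute)
  finally show ?thesis .
qed

lemma jensen_step:
  fixes x :: "nat \<Rightarrow> real"
  assumes k: "0 \<le> \<kappa>" and m: "0 < m"
  shows "exp (\<kappa> * ((T / real m) * (\<Sum>k<m. x k))\<^sup>2) \<le> (\<Sum>k<m. (1 / real m) * exp (\<kappa> * T\<^sup>2 * (x k)\<^sup>2))"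
proof -
  have sq: "(\<Sum>k<m. x k)\<^sup>2 \<le> (\<Sum>k<m. (x k)\<^sup>2) * real m"
    using sum_squared_le_sum_of_squares[of x "{..<m}"] by simp
  have "((T / real m) * (\<Sum>k<m. x k))\<^sup>2 = T\<^sup>2 / (real m)\<^sup>2 * (\<Sum>k<m. x k)\<^sup>2"
    by (simp add: power_mult_distrib power_divide)
  also have "\<dots> \<le> T\<^sup>2 / (real m)\<^sup>2 * ((\<Sum>k<m. (x k)\<^sup>2) * real m)"
    by (rule mult_left_mono[OF sq]) simp
  also have "\<dots> = (\<Sum>k<m. (1 / real m) * (T\<^sup>2 * (x k)\<^sup>2))"
    using m by (simp add: sum_distrib_left power2_eq_square field_simps)
  finally have A: "((T / real m) * (\<Sum>k<m. x k))\<^sup>2 \<le> (\<Sum>k<m. (1 / real m) * (T\<^sup>2 * (x k)\<^sup>2))" .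
  have "exp (\<kappa> * ((T / real m) * (\<Sum>k<m. x k))\<^sup>2) \<le> exp (\<kappa> * (\<Sum>k<m. (1 / real m) * (T\<^sup>2 * (x k)\<^sup>2)))"
    using mult_left_mono[OF A k] by simp
  also have "\<kappa> * (\<Sum>k<m. (1 / real m) * (T\<^sup>2 * (x k)\<^sup>2)) = (\<Sum>k<m. (1 / real m) *\<^sub>R (\<kappa> * T\<^sup>2 * (x k)\<^sup>2))"
    by (simp add: sum_distrib_left algebra_simps)
  also have "exp \<dots> \<le> (\<Sum>k<m. (1 / real m) * exp (1 * (\<kappa> * T\<^sup>2 * (x k)\<^sup>2)))"
  proof -
    have "exp (1 * (\<Sum>k<m. (1 / real m) *\<^sub>R (\<kappa> * T\<^sup>2 * (x k)\<^sup>2))) \<le> (\<Sum>k<m. (1 / real m) * exp (1 * (\<kappa> * T\<^sup>2 * (x k)\<^sup>2)))"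
      by (rule convex_on_sum[where S="{..<m}" and C=UNIV and f="\<lambda>x. exp (1 * x)" and a="\<lambda>k. 1 / real m"
          and y="\<lambda>k. \<kappa> * T\<^sup>2 * (x k)\<^sup>2", OF _ _ convex_on_exp[of 1]]) (use m in auto)
    then show ?thesis by simp
  qed
  finally show ?thesis by simp
qed

lemma fbm_exp_int_sq:
  fixes B :: "real \<Rightarrow> 'a \<Rightarrow> real^'n"
  assumes P: "prob_space M" and fBm: "is_fBm H M B" and H: "0 < H" and T: "0 < T"
    and k: "0 \<le> \<kappa>" "4 * (\<kappa> * T\<^sup>2) * real CARD('n) * T powr (2*H) \<le> 1"
  shows "\<exists>\<Phi>\<in>borel_measurable M. (AE \<omega> in M. ennreal (exp (\<kappa> * (integral {0..T} (\<lambda>r. norm (B r \<omega>)))\<^sup>2)) \<le> \<Phi> \<omega>)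
           \<and> (\<integral>\<^sup>+\<omega>. \<Phi> \<omega> \<partial>M) \<le> 2 * of_nat CARD('n)"
proof -
  note Pt = is_fBm_parts[OF fBm]
  define tk where "tk m k = real k * (T / real (Suc m))" for m k :: nat
  have tk0: "0 \<le> tk m k" for m k using T by (simp add: tk_def)
  have tkT: "tk m k \<le> T" if "k < Suc m" for m k
  proof -
    have "real k \<le> real (Suc m)" using that by simp
    then have "real k * (T / real (Suc m)) \<le> real (Suc m) * (T / real (Suc m))"
      by (rule mult_right_mono) (use T in simp)
    then show ?thesis by (simp add: tk_def)
  qed
  define G where "G m \<omega> = (\<Sum>k<Suc m. ennreal (1 / real (Suc m)) * ennreal (exp ((\<kappa> * T\<^sup>2) * (norm (B (tk m k) \<omega>))\<^sup>2)))" for m \<omega>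
  have Bm: "B (tk m k) \<in> borel_measurable M" for m k using Pt(1) tk0 by blast
  have Gm: "G m \<in> borel_measurable M" for m unfolding G_def
    by (intro borel_measurable_sum borel_measurable_times_ennreal measurable_const) (use Bm in measurable)
  have IG: "(\<integral>\<^sup>+\<omega>. G m \<omega> \<partial>M) \<le> 2 * of_nat CARD('n)" for m
  proof -
    have "(\<integral>\<^sup>+\<omega>. G m \<omega> \<partial>M) = (\<Sum>k<Suc m. ennreal (1 / real (Suc m)) * (\<integral>\<^sup>+\<omega>. ennreal (exp ((\<kappa> * T\<^sup>2) * (norm (B (tk m k) \<omega>))\<^sup>2)) \<partial>M))"
    proof -
      have me: "(\<lambda>\<omega>. ennreal (exp ((\<kappa> * T\<^sup>2) * (norm (B (tk m k) \<omega>))\<^sup>2))) \<in> borel_measurable M" for k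
        using Bm[of m k] by measurable
      have "(\<integral>\<^sup>+\<omega>. G m \<omega> \<partial>M) = (\<Sum>k<Suc m. (\<integral>\<^sup>+\<omega>. ennreal (1 / real (Suc m)) * ennreal (exp ((\<kappa> * T\<^sup>2) * (norm (B (tk m k) \<omega>))\<^sup>2)) \<partial>M))"
        unfolding G_def by (rule nn_integral_sum) (use me in auto)
      also have "\<dots> = (\<Sum>k<Suc m. ennreal (1 / real (Suc m)) * (\<integral>\<^sup>+\<omega>. ennreal (exp ((\<kappa> * T\<^sup>2) * (norm (B (tk m k) \<omega>))\<^sup>2)) \<partial>M))"
        by (intro sum.cong refl nn_integral_cmult me)
      finally show ?thesis .
    qed
    also have "\<dots> \<le> (\<Sum>k<Suc m. ennreal (1 / real (Suc m)) * (2 * of_nat CARD('n)))"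
    proof (intro sum_mono mult_left_mono)
      fix k assume "k \<in> {..<Suc m}"
      then show "(\<integral>\<^sup>+\<omega>. ennreal (exp ((\<kappa> * T\<^sup>2) * (norm (B (tk m k) \<omega>))\<^sup>2)) \<partial>M) \<le> 2 * of_nat CARD('n)"
        by (intro fbm_exp_sq[OF P fBm H tk0 tkT]) (use k in auto)
    qed simp
    also have "\<dots> = of_nat (Suc m) * ennreal (1 / real (Suc m)) * (2 * of_nat CARD('n))" by (simp add: mult.assoc)
    also have "of_nat (Suc m) * ennreal (1 / real (Suc m)) = 1"
      by (simp add: ennreal_of_nat_eq_real_of_nat ennreal_mult[symmetric] del: of_nat_Suc)
    finally show ?thesis by simp
  qed
  have AEb: "AE \<omega> in M. ennreal (exp (\<kappa> * (integral {0..T} (\<lambda>r. norm (B r \<omega>)))\<^sup>2)) \<le> liminf (\<lambda>m. G m \<omega>)"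
    using Pt(2)
  proof (eventually_elim)
    case (elim \<omega>)
    have cg: "continuous_on {0..T} (\<lambda>r. norm (B r \<omega>))"
      by (intro continuous_intros continuous_on_subset[OF elim[THEN conjunct2]]) auto
    define R where "R m = (T / real (Suc m)) * (\<Sum>k<Suc m. norm (B (real k * (T / real (Suc m))) \<omega>))" for m
    have lim: "R \<longlonglongrightarrow> integral {0..T} (\<lambda>r. norm (B r \<omega>))"
      unfolding R_def by (rule riemann_conv[OF cg T])
    define S where "S = integral {0..T} (\<lambda>r. norm (B r \<omega>))"
    have "(\<lambda>m. ennreal (exp (\<kappa> * (R m)\<^sup>2))) \<longlonglongrightarrow> ennreal (exp (\<kappa> * S\<^sup>2))"
      unfolding S_def by (intro tendsto_ennrealI tendsto_intros lim)
    then have "liminf (\<lambda>m. ennreal (exp (\<kappa> * (R m)\<^sup>2))) = ennreal (exp (\<kappa> * S\<^sup>2))"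
      by (intro lim_imp_Liminf) auto
    moreover have "liminf (\<lambda>m. ennreal (exp (\<kappa> * (R m)\<^sup>2))) \<le> liminf (\<lambda>m. G m \<omega>)"
    proof (intro Liminf_mono always_eventually allI)
      fix m
      have "exp (\<kappa> * (R m)\<^sup>2) \<le> (\<Sum>k<Suc m. (1 / real (Suc m)) * exp (\<kappa> * T\<^sup>2 * (norm (B (tk m k) \<omega>))\<^sup>2))"
        unfolding R_def tk_def by (rule jensen_step[OF k(1)]) simp
      then have "ennreal (exp (\<kappa> * (R m)\<^sup>2)) \<le> ennreal (\<Sum>k<Suc m. (1 / real (Suc m)) * exp (\<kappa> * T\<^sup>2 * (norm (B (tk m k) \<omega>))\<^sup>2))"
        by (rule ennreal_leI)
      also have "\<dots> = G m \<omega>" unfolding G_def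
        by (subst sum_ennreal[symmetric]) (auto simp: ennreal_mult[symmetric] mult.assoc)
      finally show "ennreal (exp (\<kappa> * (R m)\<^sup>2)) \<le> G m \<omega>" .
    qed
    ultimately show ?case unfolding S_def by simp
  qed
  have "(\<integral>\<^sup>+\<omega>. liminf (\<lambda>m. G m \<omega>) \<partial>M) \<le> liminf (\<lambda>m. (\<integral>\<^sup>+\<omega>. G m \<omega> \<partial>M))"
    by (rule nn_integral_liminf[OF Gm])
  also have "\<dots> \<le> liminf (\<lambda>m. 2 * of_nat CARD('n) :: ennreal)"
    by (intro Liminf_mono always_eventually allI IG)
  also have "\<dots> = 2 * of_nat CARD('n)" by (simp add: Liminf_const)
  finally have I: "(\<integral>\<^sup>+\<omega>. liminf (\<lambda>m. G m \<omega>) \<partial>M) \<le> 2 * of_nat CARD('n)" .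
  have "(\<lambda>\<omega>. liminf (\<lambda>m. G m \<omega>)) \<in> borel_measurable M"
    by (rule borel_measurable_liminf[OF Gm])
  then show ?thesis using AEb I by (intro bexI[of _ "\<lambda>\<omega>. liminf (\<lambda>m. G m \<omega>)"] conjI) auto
qed

lemma exp_three: "exp (a + b + c) \<le> exp (3*a) + exp (3*b) + exp (3*c)" for a b c :: real
proof -
  have "a + b + c \<le> 3 * max a (max b c)" by linarith
  then have "exp (a + b + c) \<le> exp (3 * max a (max b c))" by simp
  also have "\<dots> \<le> exp (3*a) + exp (3*b) + exp (3*c)"
    by (cases "a \<le> max b c"; cases "b \<le> c") (auto simp: max_def add_increasing add_increasing2 add_nonneg_nonneg)
  finally show ?thesis .
qed

lemma sq_three: "(x + y + z)\<^sup>2 \<le> 3 * (x\<^sup>2 + y\<^sup>2 + z\<^sup>2)" for x y z :: real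
proof -
  have "0 \<le> (x-y)\<^sup>2 + (y-z)\<^sup>2 + (x-z)\<^sup>2" by simp
  then show ?thesis unfolding power2_eq_square by (simp add: algebra_simps)
qed

theorem lemma5p3:
  fixes H :: real and \<sigma> :: "real ^ 'n ^ 'n" and b :: "real ^ 'n \<Rightarrow> real ^ 'n"
    and M :: "'a measure" and B :: "real \<Rightarrow> 'a \<Rightarrow> real ^ 'n"
    and Y :: "real ^ 'n \<Rightarrow> real \<Rightarrow> 'a \<Rightarrow> real ^ 'n" and K :: "(real ^ 'n) set"
  assumes H: "H \<in> {0<..<1/2} \<union> {1/2<..<1}"
    and inv: "invertible \<sigma>"
    and b_hoelder: "H > 1/2 \<Longrightarrow> \<exists>\<alpha> > 1 - 1/(2*H). \<exists>L. \<forall>y z. y \<noteq> z \<longrightarrow>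
                       norm (b y - b z) \<le> L * norm (y - z) powr \<alpha>"
    and b_growth: "H < 1/2 \<Longrightarrow> b \<in> borel_measurable borel \<and> (\<exists>C. \<forall>y. norm (b y) \<le> C * (1 + norm y))"
    and P: "prob_space M"
    and fBm: "is_fBm H M B"
    and sol: "\<And>y0. is_fSDE_solution M B b \<sigma> y0 (Y y0)"
    and K: "compact K"
    and T: "T > 0"
  shows "\<exists>\<rho>>0. (SUP y0\<in>K. SUP t\<in>{0..T}. \<integral>\<^sup>+ \<omega>. ennreal (exp (\<rho> * (norm (Y y0 t \<omega>))\<^sup>2)) \<partial>M) < \<infinity>"
proof -
  interpret prob_space M by (rule P)
  have H0: "0 < H" using H by auto
  obtain C where C0: "0 \<le> C" and Cb: "\<And>y. norm (b y) \<le> C * (1 + norm y)"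
  proof (cases "H < 1/2")
    case True
    then obtain C1 where C1: "\<forall>y. norm (b y) \<le> C1 * (1 + norm y)" using b_growth by blast
    have "norm (b y) \<le> max C1 0 * (1 + norm y)" for y
    proof -
      have "C1 * (1 + norm y) \<le> max C1 0 * (1 + norm y)"
        by (rule mult_right_mono) auto
      then show ?thesis using C1 by (meson order_trans)
    qed
    then show ?thesis using that[of "max C1 0"] by auto
  next
    case False
    then have H2: "H > 1/2" using H by auto
    then obtain \<alpha> L where \<alpha>: "\<alpha> > 1 - 1/(2*H)"
      and L: "\<forall>y z. y \<noteq> z \<longrightarrow> norm (b y - b z) \<le> L * norm (y - z) powr \<alpha>"
      using b_hoelder by blast
    have "1/(2*H) < 1" using H2 by simp
    then have "\<alpha> > 0" using \<alpha> by linarith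
    from hoelder_lin_growth[OF this L] show ?thesis using that by blast
  qed
  obtain R where R: "\<And>y. y \<in> K \<Longrightarrow> norm y \<le> R"
    using compact_imp_bounded[OF K] unfolding bounded_iff by blast
  obtain sg where sg0: "0 < sg" and sgb: "\<And>x. norm (\<sigma> *v x) \<le> norm x * sg"
    using bounded_linear.pos_bounded[OF matrix_vector_mul_bounded_linear[of \<sigma>]] by blast
  have sgb': "\<And>x. norm (\<sigma> *v x) \<le> sg * norm x" using sgb by (simp add: mult.commute)
  define n where "n = real CARD('n)"
  define TH where "TH = T powr (2*H)"
  have n0: "0 < n" unfolding n_def by simp
  have TH0: "0 < TH" unfolding TH_def using T by simp
  define \<kappa>0 where "\<kappa>0 = 1 / (4 * n * TH)"
  have k00: "0 < \<kappa>0" unfolding \<kappa>0_def using n0 TH0 by simp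
  have k0e: "4 * \<kappa>0 * n * TH = 1" unfolding \<kappa>0_def using n0 TH0 by simp
  define D where "D = (R + C*T) * (1 + C*exp(C*T)*T)"
  define E where "E = sg"
  define F where "F = C*exp(C*T) * sg"
  define Q where "Q = E\<^sup>2 + F\<^sup>2 * T\<^sup>2 + 1"
  have Q1: "1 \<le> Q" unfolding Q_def by simp
  define \<rho> where "\<rho> = \<kappa>0 / (9 * Q)"
  have \<rho>0: "0 < \<rho>" unfolding \<rho>_def using k00 Q1 by simp
  define \<kappa>1 where "\<kappa>1 = 9 * \<rho> * E\<^sup>2"
  define \<kappa>2 where "\<kappa>2 = 9 * \<rho> * F\<^sup>2"
  have k1le: "\<kappa>1 \<le> \<kappa>0"
  proof -
    have "\<kappa>1 = \<kappa>0 * (E\<^sup>2 / Q)" unfolding \<kappa>1_def \<rho>_def using Q1 by (simp add: field_simps)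
    also have "\<dots> \<le> \<kappa>0 * 1"
    proof (intro mult_left_mono)
      have "E\<^sup>2 \<le> Q" unfolding Q_def by simp
      then show "E\<^sup>2 / Q \<le> 1" using Q1 by simp
    qed (use k00 in auto)
    finally show ?thesis by simp
  qed
  have k2le: "\<kappa>2 * T\<^sup>2 \<le> \<kappa>0"
  proof -
    have "\<kappa>2 * T\<^sup>2 = \<kappa>0 * (F\<^sup>2 * T\<^sup>2 / Q)" unfolding \<kappa>2_def \<rho>_def using Q1 by (simp add: field_simps)
    also have "\<dots> \<le> \<kappa>0 * 1"
    proof (intro mult_left_mono)
      have "F\<^sup>2 * T\<^sup>2 \<le> Q" unfolding Q_def by simp
      then show "F\<^sup>2 * T\<^sup>2 / Q \<le> 1" using Q1 by simp
    qed (use k00 in auto)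
    finally show ?thesis by simp
  qed
  have k10: "0 \<le> \<kappa>1" "0 \<le> \<kappa>2" unfolding \<kappa>1_def \<kappa>2_def using \<rho>0 by auto
  have k1: "4 * \<kappa>1 * real CARD('n) * T powr (2*H) \<le> 1"
  proof -
    have "4 * \<kappa>1 * n * TH \<le> 4 * \<kappa>0 * n * TH"
      using k1le n0 TH0 by (intro mult_right_mono) auto
    then have "4 * \<kappa>1 * n * TH \<le> 1" using k0e by linarith
    then show ?thesis by (simp only: n_def TH_def)
  qed
  have k2: "4 * (\<kappa>2 * T\<^sup>2) * real CARD('n) * T powr (2*H) \<le> 1"
  proof -
    have "4 * (\<kappa>2 * T\<^sup>2) * n * TH \<le> 4 * \<kappa>0 * n * TH"
      using k2le n0 TH0 by (intro mult_right_mono) auto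
    then have "4 * (\<kappa>2 * T\<^sup>2) * n * TH \<le> 1" using k0e by linarith
    then show ?thesis by (simp only: n_def TH_def)
  qed
  obtain \<Phi> where \<Phi>m: "\<Phi> \<in> borel_measurable M"
    and AE\<Phi>: "AE \<omega> in M. ennreal (exp (\<kappa>2 * (integral {0..T} (\<lambda>r. norm (B r \<omega>)))\<^sup>2)) \<le> \<Phi> \<omega>"
    and I\<Phi>: "(\<integral>\<^sup>+\<omega>. \<Phi> \<omega> \<partial>M) \<le> 2 * of_nat CARD('n)"
    using fbm_exp_int_sq[OF P fBm H0 T k10(2) k2] by blast
  note Pt = is_fBm_parts[OF fBm]
  define Bd where "Bd = ennreal (exp (9 * \<rho> * D\<^sup>2)) + 2 * of_nat CARD('n) + 2 * of_nat CARD('n)"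
  have main: "(\<integral>\<^sup>+ \<omega>. ennreal (exp (\<rho> * (norm (Y y0 t \<omega>))\<^sup>2)) \<partial>M) \<le> Bd"
    if y0: "y0 \<in> K" and t: "t \<in> {0..T}" for y0 t
  proof -
    have t0: "0 \<le> t" using t by simp
    have Btm: "B t \<in> borel_measurable M" using Pt(1) t0 by blast
    have solAE: "AE \<omega> in M. continuous_on {0..} (\<lambda>t. Y y0 t \<omega>) \<and>
        (\<forall>t\<ge>0. ((\<lambda>s. b (Y y0 s \<omega>)) has_integral (Y y0 t \<omega> - y0 - \<sigma> *v B t \<omega>)) {0..t})"
      using sol[of y0] unfolding is_fSDE_solution_def by blast
    have AEb: "AE \<omega> in M. ennreal (exp (\<rho> * (norm (Y y0 t \<omega>))\<^sup>2))
        \<le> ennreal (exp (9 * \<rho> * D\<^sup>2)) + ennreal (exp (\<kappa>1 * (norm (B t \<omega>))\<^sup>2)) + \<Phi> \<omega>"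
      using Pt(2) solAE AE\<Phi>
    proof eventually_elim
      case (elim \<omega>)
      define S where "S = integral {0..T} (\<lambda>r. norm (B r \<omega>))"
      have pb0: "norm (Y y0 t \<omega>) \<le> (R + C*T) * (1 + C*exp(C*T)*T) + sg * norm (B t \<omega>)
           + C*exp(C*T) * sg * integral {0..T} (\<lambda>r. norm (B r \<omega>))"
      proof (rule path_bound[where Yp="\<lambda>s. Y y0 s \<omega>" and Bp="\<lambda>s. B s \<omega>" and b=b and \<sigma>=\<sigma>])
        show "0 \<le> C" by (rule C0)
        show "norm (b y) \<le> C * (1 + norm y)" for y by (rule Cb)
        show "0 \<le> sg" using sg0 by simp
        show "norm (\<sigma> *v x) \<le> sg * norm x" for x by (rule sgb')
        show "norm y0 \<le> R" by (rule R[OF y0])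
        show "0 \<le> T" using T by simp
        show "continuous_on {0..} (\<lambda>s. Y y0 s \<omega>)" using elim(2) by blast
        show "continuous_on {0..} (\<lambda>s. B s \<omega>)" using elim(1) by blast
        show "((\<lambda>s. b (Y y0 s \<omega>)) has_integral (Y y0 t' \<omega> - y0 - \<sigma> *v B t' \<omega>)) {0..t'}" if "0 \<le> t'" for t'
          using elim(2) that by blast
        show "t \<in> {0..T}" by (rule t)
      qed
      have pb: "norm (Y y0 t \<omega>) \<le> D + E * norm (B t \<omega>) + F * S"
        using pb0 unfolding D_def E_def F_def S_def by simp
      have "(norm (Y y0 t \<omega>))\<^sup>2 \<le> (D + E * norm (B t \<omega>) + F * S)\<^sup>2"
        by (rule power_mono[OF pb]) simp
      also have "\<dots> \<le> 3 * (D\<^sup>2 + (E * norm (B t \<omega>))\<^sup>2 + (F * S)\<^sup>2)" by (rule sq_three)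
      finally have "\<rho> * (norm (Y y0 t \<omega>))\<^sup>2 \<le> \<rho> * (3 * (D\<^sup>2 + (E * norm (B t \<omega>))\<^sup>2 + (F * S)\<^sup>2))"
        using \<rho>0 by (intro mult_left_mono) auto
      also have "\<dots> = 3 * \<rho> * D\<^sup>2 + 3 * \<rho> * (E * norm (B t \<omega>))\<^sup>2 + 3 * \<rho> * (F * S)\<^sup>2"
        by (simp add: algebra_simps)
      finally have "exp (\<rho> * (norm (Y y0 t \<omega>))\<^sup>2) \<le> exp (3 * \<rho> * D\<^sup>2 + 3 * \<rho> * (E * norm (B t \<omega>))\<^sup>2 + 3 * \<rho> * (F * S)\<^sup>2)"
        by simp
      also have "\<dots> \<le> exp (3 * (3 * \<rho> * D\<^sup>2)) + exp (3 * (3 * \<rho> * (E * norm (B t \<omega>))\<^sup>2)) + exp (3 * (3 * \<rho> * (F * S)\<^sup>2))"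
        by (rule exp_three)
      also have "\<dots> = exp (9 * \<rho> * D\<^sup>2) + exp (\<kappa>1 * (norm (B t \<omega>))\<^sup>2) + exp (\<kappa>2 * S\<^sup>2)"
        proof -
        have "3 * (3 * \<rho> * (E * norm (B t \<omega>))\<^sup>2) = \<kappa>1 * (norm (B t \<omega>))\<^sup>2"
          unfolding \<kappa>1_def power_mult_distrib by simp
        moreover have "3 * (3 * \<rho> * (F * S)\<^sup>2) = \<kappa>2 * S\<^sup>2"
          unfolding \<kappa>2_def power_mult_distrib by simp
        moreover have "3 * (3 * \<rho> * D\<^sup>2) = 9 * \<rho> * D\<^sup>2" by simp
        ultimately show ?thesis by simp
      qed
      finally have re: "exp (\<rho> * (norm (Y y0 t \<omega>))\<^sup>2) \<le> exp (9 * \<rho> * D\<^sup>2) + exp (\<kappa>1 * (norm (B t \<omega>))\<^sup>2) + exp (\<kappa>2 * S\<^sup>2)" .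
      have "ennreal (exp (\<rho> * (norm (Y y0 t \<omega>))\<^sup>2)) \<le> ennreal (exp (9 * \<rho> * D\<^sup>2) + exp (\<kappa>1 * (norm (B t \<omega>))\<^sup>2) + exp (\<kappa>2 * S\<^sup>2))"
        by (rule ennreal_leI[OF re])
      also have "\<dots> = ennreal (exp (9 * \<rho> * D\<^sup>2)) + ennreal (exp (\<kappa>1 * (norm (B t \<omega>))\<^sup>2)) + ennreal (exp (\<kappa>2 * S\<^sup>2))"
        by (simp add: ennreal_plus)
      also have "\<dots> \<le> ennreal (exp (9 * \<rho> * D\<^sup>2)) + ennreal (exp (\<kappa>1 * (norm (B t \<omega>))\<^sup>2)) + \<Phi> \<omega>"
        using elim(3) unfolding S_def by (intro add_left_mono) 
      finally show ?case .
    qed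
    have m2: "(\<lambda>\<omega>. ennreal (exp (\<kappa>1 * (norm (B t \<omega>))\<^sup>2))) \<in> borel_measurable M"
      using Btm by measurable
    have "(\<integral>\<^sup>+ \<omega>. ennreal (exp (\<rho> * (norm (Y y0 t \<omega>))\<^sup>2)) \<partial>M)
        \<le> (\<integral>\<^sup>+ \<omega>. ennreal (exp (9 * \<rho> * D\<^sup>2)) + ennreal (exp (\<kappa>1 * (norm (B t \<omega>))\<^sup>2)) + \<Phi> \<omega> \<partial>M)"
      by (rule nn_integral_mono_AE[OF AEb])
    also have "\<dots> = (\<integral>\<^sup>+ \<omega>. ennreal (exp (9 * \<rho> * D\<^sup>2)) + ennreal (exp (\<kappa>1 * (norm (B t \<omega>))\<^sup>2)) \<partial>M) + (\<integral>\<^sup>+ \<omega>. \<Phi> \<omega> \<partial>M)"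
      by (rule nn_integral_add) (use m2 \<Phi>m in auto)
    also have "(\<integral>\<^sup>+ \<omega>. ennreal (exp (9 * \<rho> * D\<^sup>2)) + ennreal (exp (\<kappa>1 * (norm (B t \<omega>))\<^sup>2)) \<partial>M)
        = (\<integral>\<^sup>+ \<omega>. ennreal (exp (9 * \<rho> * D\<^sup>2)) \<partial>M) + (\<integral>\<^sup>+ \<omega>. ennreal (exp (\<kappa>1 * (norm (B t \<omega>))\<^sup>2)) \<partial>M)"
      by (rule nn_integral_add) (use m2 in auto)
    also have "(\<integral>\<^sup>+ \<omega>. ennreal (exp (9 * \<rho> * D\<^sup>2)) \<partial>M) = ennreal (exp (9 * \<rho> * D\<^sup>2))"
      by (simp add: emeasure_space_1)
    also have "(\<integral>\<^sup>+ \<omega>. ennreal (exp (\<kappa>1 * (norm (B t \<omega>))\<^sup>2)) \<partial>M) \<le> 2 * of_nat CARD('n)"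
      using t by (intro fbm_exp_sq[OF P fBm H0 t0 _ k10(1) k1]) auto
    finally have "(\<integral>\<^sup>+ \<omega>. ennreal (exp (\<rho> * (norm (Y y0 t \<omega>))\<^sup>2)) \<partial>M)
        \<le> ennreal (exp (9 * \<rho> * D\<^sup>2)) + 2 * of_nat CARD('n) + (\<integral>\<^sup>+ \<omega>. \<Phi> \<omega> \<partial>M)"
      by (simp add: add_mono)
    also have "\<dots> \<le> Bd" unfolding Bd_def using I\<Phi> by (rule add_left_mono)
    finally show ?thesis .
  qed
  have "(SUP y0\<in>K. SUP t\<in>{0..T}. \<integral>\<^sup>+ \<omega>. ennreal (exp (\<rho> * (norm (Y y0 t \<omega>))\<^sup>2)) \<partial>M) \<le> Bd"
    by (intro SUP_least main)
  moreover have "Bd < \<infinity>" unfolding Bd_def by (simp add: ennreal_mult_less_top of_nat_less_top)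
  ultimately show ?thesis using \<rho>0 by (intro exI[of _ \<rho>]) auto
qed

end
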